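(* Let $\kappa\ge3$, $n\ge1$, $r,r'$, $F$, the $n$-periodic sequences $p,q$ and the $Y$-system solution $Y_{i,j,k}$ (for $i+j+k$ even) with the initial conditions $Y_{i,j,-1}=(q_{((\kappa-2)i+\kappa j+r-r')/2})^{-1}$ ($i+j$ odd) and $Y_{i,j,0}=p_{((\kappa-2)i+\kappa j)/2}$ ($i+j$ even) be as described in the context. Then $Y$ is doubly periodic: $$Y_{i,j,k}=Y_{(i,j,k)+\alpha(\kappa,2-\kappa,0)+\beta(n,-n,0)}$$ for all $(i,j,k)$ with $i+j+k\equiv0\bmod 2$ and all $\alpha,\beta\in\mathbb Z$.
   Context: $\kappa\ge 3$ and $n\ge 1$ are integers, $r=\lfloor(\kappa-2)/2\rfloor$, $r'=\lceil(\kappa-2)/2\rceil$, $F$ a field, and $p=(p_m)_{m\in\mathbb Z}$, $q=(q_m)_{m\in\mathbb Z}$ are $n$-periodic sequences in $F$. $Y:\{(i,j,k)\in\mathbb Z^3:i+j+k \text{ even}\}\to F\setminus\{0,-1\}$ satisfies the $Y$-system $Y_{i,j,k+1}Y_{i,j,k-1}=\frac{(1+Y_{i+1,j,k})(1+Y_{i-1,j,k})}{(1+Y_{i,j+1,k}^{-1})(1+Y_{i,j-1,k}^{-1})}$ for all $(i,j,k)$ with $i+j+k$ odd, together with the stated initial conditions at $k=-1$ and $k=0$. *)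

theory Defs
  imports Main
begin

(* r = floor((kappa-2)/2), r' = ceiling((kappa-2)/2) *)
definition rfl :: "int \<Rightarrow> int" where "rfl \<kappa> = (\<kappa> - 2) div 2"
definition rcl :: "int \<Rightarrow> int" where "rcl \<kappa> = - ((2 - \<kappa>) div 2)"

end

theory Submission
  imports Defs
begin

theorem mainTheorem2:
  fixes \<kappa> n :: int
    and p q :: "int \<Rightarrow> 'a::field"
    and Y :: "int \<Rightarrow> int \<Rightarrow> int \<Rightarrow> 'a"
  assumes kappa: "\<kappa> \<ge> 3"
    and n: "n \<ge> 1"
    and p_per: "\<And>m. p (m + n) = p m"
    and q_per: "\<And>m. q (m + n) = q m"
    and Y_range: "\<And>i j k. even (i + j + k) \<Longrightarrow> Y i j k \<noteq> 0 \<and> Y i j k \<noteq> -1"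
    and Ysys: "\<And>i j k. odd (i + j + k) \<Longrightarrow>
       Y i j (k + 1) * Y i j (k - 1) =
         ((1 + Y (i + 1) j k) * (1 + Y (i - 1) j k)) /
         ((1 + inverse (Y i (j + 1) k)) * (1 + inverse (Y i (j - 1) k)))"
    and init_m1: "\<And>i j. odd (i + j) \<Longrightarrow>
       Y i j (-1) = inverse (q (((\<kappa> - 2) * i + \<kappa> * j + rfl \<kappa> - rcl \<kappa>) div 2))"
    and init_0: "\<And>i j. even (i + j) \<Longrightarrow>
       Y i j 0 = p (((\<kappa> - 2) * i + \<kappa> * j) div 2)"
  shows "\<forall>i j k \<alpha> \<beta>. even (i + j + k) \<longrightarrow>
     Y i j k = Y (i + \<alpha> * \<kappa> + \<beta> * n) (j + \<alpha> * (2 - \<kappa>) - \<beta> * n) k"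
proof -
  define P where "P k \<longleftrightarrow> (\<forall>i j \<alpha> \<beta>. even (i + j + k) \<longrightarrow>
     Y i j k = Y (i + \<alpha> * \<kappa> + \<beta> * n) (j + \<alpha> * (2 - \<kappa>) - \<beta> * n) k)" for k
  define R where "R i j k = ((1 + Y (i + 1) j k) * (1 + Y (i - 1) j k)) /
         ((1 + inverse (Y i (j + 1) k)) * (1 + inverse (Y i (j - 1) k)))" for i j k
  have pern: "p (m - \<beta> * n) = p m" for m \<beta>
  proof -
    have "\<forall>m. p (m + c * n) = p m" if "c \<ge> 0" for c :: int
      using that
    proof (induction c rule: int_ge_induct)
      case base then show ?case by simp
    next
      case (step c) then show ?case
        by (metis (no_types, opaque_lifting) add.assoc distrib_right mult_1 p_per)
    qed
    note H = this
    show ?thesis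
    proof (cases "\<beta> \<le> 0")
      case True then show ?thesis using H[of "-\<beta>"] by (simp add: algebra_simps)
    next
      case False then have "\<forall>m. p (m + \<beta> * n) = p m" using H[of \<beta>] by simp
      then have "p ((m - \<beta> * n) + \<beta> * n) = p (m - \<beta> * n)" by blast
      then show ?thesis by simp
    qed
  qed
  have qern: "q (m - \<beta> * n) = q m" for m \<beta>
  proof -
    have "\<forall>m. q (m + c * n) = q m" if "c \<ge> 0" for c :: int
      using that
    proof (induction c rule: int_ge_induct)
      case base then show ?case by simp
    next
      case (step c) then show ?case
        by (metis (no_types, opaque_lifting) add.assoc distrib_right mult_1 q_per)
    qed
    note H = this
    show ?thesis
    proof (cases "\<beta> \<le> 0")
      case True then show ?thesis using H[of "-\<beta>"] by (simp add: algebra_simps)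
    next
      case False then have "\<forall>m. q (m + \<beta> * n) = q m" using H[of \<beta>] by simp
      then have "q ((m - \<beta> * n) + \<beta> * n) = q (m - \<beta> * n)" by blast
      then show ?thesis by simp
    qed
  qed
  have P0: "P 0"
    unfolding P_def
  proof (intro allI impI)
    fix i j \<alpha> \<beta> :: int assume e: "even (i + j + 0)"
    have e2: "even ((i + \<alpha> * \<kappa> + \<beta> * n) + (j + \<alpha> * (2 - \<kappa>) - \<beta> * n))"
      using e by (simp add: algebra_simps)
    have "(\<kappa> - 2) * (i + \<alpha> * \<kappa> + \<beta> * n) + \<kappa> * (j + \<alpha> * (2 - \<kappa>) - \<beta> * n)
        = ((\<kappa> - 2) * i + \<kappa> * j) + 2 * (- \<beta> * n)"
      by (simp add: algebra_simps)
    then have "((\<kappa> - 2) * (i + \<alpha> * \<kappa> + \<beta> * n) + \<kappa> * (j + \<alpha> * (2 - \<kappa>) - \<beta> * n)) div 2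
        = ((\<kappa> - 2) * i + \<kappa> * j) div 2 - \<beta> * n" by simp
    then show "Y i j 0 = Y (i + \<alpha> * \<kappa> + \<beta> * n) (j + \<alpha> * (2 - \<kappa>) - \<beta> * n) 0"
      using init_0[OF e2] init_0[of i j] e pern by simp
  qed
  have Pm1: "P (-1)"
    unfolding P_def
  proof (intro allI impI)
    fix i j \<alpha> \<beta> :: int assume e: "even (i + j + -1)"
    have o1: "odd (i + j)" using e by simp
    have e2: "odd ((i + \<alpha> * \<kappa> + \<beta> * n) + (j + \<alpha> * (2 - \<kappa>) - \<beta> * n))"
      using o1 by (simp add: algebra_simps)
    have "(\<kappa> - 2) * (i + \<alpha> * \<kappa> + \<beta> * n) + \<kappa> * (j + \<alpha> * (2 - \<kappa>) - \<beta> * n) + rfl \<kappa> - rcl \<kappa>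
        = ((\<kappa> - 2) * i + \<kappa> * j + rfl \<kappa> - rcl \<kappa>) + 2 * (- \<beta> * n)"
      by (simp add: algebra_simps)
    then have "((\<kappa> - 2) * (i + \<alpha> * \<kappa> + \<beta> * n) + \<kappa> * (j + \<alpha> * (2 - \<kappa>) - \<beta> * n) + rfl \<kappa> - rcl \<kappa>) div 2
        = ((\<kappa> - 2) * i + \<kappa> * j + rfl \<kappa> - rcl \<kappa>) div 2 - \<beta> * n" by simp
    then show "Y i j (-1) = Y (i + \<alpha> * \<kappa> + \<beta> * n) (j + \<alpha> * (2 - \<kappa>) - \<beta> * n) (-1)"
      using init_m1[OF e2] init_m1[OF o1] qern by simp
  qed
  have Rsh: "R i j k = R (i + \<alpha> * \<kappa> + \<beta> * n) (j + \<alpha> * (2 - \<kappa>) - \<beta> * n) k"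
    if "P k" "odd (i + j + k)" for i j k \<alpha> \<beta>
  proof -
    have PP: "Y i0 j0 k = Y (i0 + \<alpha> * \<kappa> + \<beta> * n) (j0 + \<alpha> * (2 - \<kappa>) - \<beta> * n) k"
      if "even (i0 + j0 + k)" for i0 j0
      using \<open>P k\<close> that unfolding P_def by blast
    have a: "Y (i+1) j k = Y (i + \<alpha> * \<kappa> + \<beta> * n + 1) (j + \<alpha> * (2 - \<kappa>) - \<beta> * n) k"
      using PP[of "i+1" j] that(2) by (simp add: algebra_simps)
    have b: "Y (i-1) j k = Y (i + \<alpha> * \<kappa> + \<beta> * n - 1) (j + \<alpha> * (2 - \<kappa>) - \<beta> * n) k"
      using PP[of "i-1" j] that(2) by (simp add: algebra_simps)
    have c: "Y i (j+1) k = Y (i + \<alpha> * \<kappa> + \<beta> * n) (j + \<alpha> * (2 - \<kappa>) - \<beta> * n + 1) k"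
      using PP[of i "j+1"] that(2) by (simp add: algebra_simps)
    have d: "Y i (j-1) k = Y (i + \<alpha> * \<kappa> + \<beta> * n) (j + \<alpha> * (2 - \<kappa>) - \<beta> * n - 1) k"
      using PP[of i "j-1"] that(2) by (simp add: algebra_simps)
    show ?thesis unfolding R_def using a b c d by simp
  qed
  have fwd: "P (k + 1)" if "P (k - 1)" "P k" for k
    unfolding P_def
  proof (intro allI impI)
    fix i j \<alpha> \<beta> :: int assume e: "even (i + j + (k + 1))"
    define i' where "i' = i + \<alpha> * \<kappa> + \<beta> * n"
    define j' where "j' = j + \<alpha> * (2 - \<kappa>) - \<beta> * n"
    have o: "odd (i + j + k)" using e by simp
    have o': "odd (i' + j' + k)" using o unfolding i'_def j'_def by (simp add: algebra_simps)
    have nz: "Y i j (k - 1) \<noteq> 0" using Y_range[of i j "k-1"] o by simp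
    have nz': "Y i' j' (k - 1) \<noteq> 0" using Y_range[of i' j' "k-1"] o' by simp
    have y1: "Y i j (k+1) = R i j k / Y i j (k - 1)"
      using Ysys[OF o] nz unfolding R_def by (metis nonzero_mult_div_cancel_right)
    have y2: "Y i' j' (k+1) = R i' j' k / Y i' j' (k - 1)"
      using Ysys[OF o'] nz' unfolding R_def by (metis nonzero_mult_div_cancel_right)
    have "Y i j (k - 1) = Y i' j' (k - 1)"
      using that(1) o unfolding P_def i'_def j'_def by simp
    moreover have "R i j k = R i' j' k" using Rsh[OF that(2) o] unfolding i'_def j'_def .
    ultimately show "Y i j (k + 1) = Y (i + \<alpha> * \<kappa> + \<beta> * n) (j + \<alpha> * (2 - \<kappa>) - \<beta> * n) (k + 1)"
      using y1 y2 unfolding i'_def j'_def by simp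
  qed
  have bwd: "P (k - 1)" if "P (k + 1)" "P k" for k
    unfolding P_def
  proof (intro allI impI)
    fix i j \<alpha> \<beta> :: int assume e: "even (i + j + (k - 1))"
    define i' where "i' = i + \<alpha> * \<kappa> + \<beta> * n"
    define j' where "j' = j + \<alpha> * (2 - \<kappa>) - \<beta> * n"
    have o: "odd (i + j + k)" using e by simp
    have o': "odd (i' + j' + k)" using o unfolding i'_def j'_def by (simp add: algebra_simps)
    have nz: "Y i j (k + 1) \<noteq> 0" using Y_range[of i j "k+1"] o by simp
    have nz': "Y i' j' (k + 1) \<noteq> 0" using Y_range[of i' j' "k+1"] o' by simp
    have y1: "Y i j (k-1) = R i j k / Y i j (k + 1)"
      using Ysys[OF o] nz unfolding R_def by (metis nonzero_mult_div_cancel_left)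
    have y2: "Y i' j' (k-1) = R i' j' k / Y i' j' (k + 1)"
      using Ysys[OF o'] nz' unfolding R_def by (metis nonzero_mult_div_cancel_left)
    have "Y i j (k + 1) = Y i' j' (k + 1)"
      using that(1) o unfolding P_def i'_def j'_def by simp
    moreover have "R i j k = R i' j' k" using Rsh[OF that(2) o] unfolding i'_def j'_def .
    ultimately show "Y i j (k - 1) = Y (i + \<alpha> * \<kappa> + \<beta> * n) (j + \<alpha> * (2 - \<kappa>) - \<beta> * n) (k - 1)"
      using y1 y2 unfolding i'_def j'_def by simp
  qed
  have up: "P (int m - 1) \<and> P (int m)" for m :: nat
  proof (induction m)
    case 0 then show ?case using P0 Pm1 by simp
  next
    case (Suc m) then show ?case using fwd[of "int m"] by (simp add: add.commute)
  qed
  have down: "P (- int m) \<and> P (- int m - 1)" for m :: nat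
  proof (induction m)
    case 0 then show ?case using P0 Pm1 by simp
  next
    case (Suc m) then show ?case proof -
      have "P (- int m - 1 - 1)" using Suc bwd[of "- int m - 1"] by simp
      moreover have e1: "- int (Suc m) = - int m - 1" "- int (Suc m) - 1 = - int m - 1 - 1" by simp_all
      ultimately show ?thesis using Suc by (simp only: e1)
    qed
  qed
  have "P k" for k
  proof (cases "k \<ge> 0")
    case True then show ?thesis using up[of "nat k"] by simp
  next
    case False then show ?thesis using down[of "nat (-k)"] by simp
  qed
  then show ?thesis unfolding P_def by blast
qed

end
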